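(* Let $G=(V,E)$ be a connected graph, $s\in V$, and $\mathcal{T}$ the layering tree of $G$ with respect to $s$. Let $i\ge \ell(\mathcal{T})+2$ and $k\le i-\ell(\mathcal{T})-2$. Then $\mathcal{T}_k$ is determined by $G_i$ together with the layers $L_0,\dots,L_{i-1}$: for every $j\le k-1$, two vertices $u,v\in L_j$ lie in the same part of $\mathcal{T}$ if and only if they are connected in $G_i[L_{\ge j}]=G[L_j\cup\dots\cup L_{i-1}]$, and two parts at layers $\le k-1$ are adjacent in $\mathcal{T}$ iff some edge of $G_i$ joins them. In particular $\mathcal{T}_k$ can be computed from $G_i$ without any distance queries.
   Context: For a connected graph $G$ and root $s\in V(G)$, the BFS layers are $L_i=\{v: d_G(s,v)=i\}$ for $i\ge 0$, with $L_{\le k}=L_0\cup\dots\cup L_k$, $L_{\ge k}=\bigcup_{j\ge k}L_j$, $L_{-1}=\emptyset$. For each $i\ge 0$, let $S_i^1,\dots,S_i^{s_i}$ be the connected components of $G\setminus L_{\le i-1}$ (i.e. of $G[L_{\ge i}]$), and let $P_i^j=S_i^j\cap L_i$; the nonempty sets $P_i^j$ are the parts at layer (depth) $i$, and the set $\mathcal{P}$ of all parts over all layers partitions $V(G)$. The layering tree $\mathcal{T}=(\mathcal{P},\mathcal{E})$ has the parts as vertices, with $(P,P')\in\mathcal{E}$ iff some $u\in P$, $u'\in P'$ are adjacent in $G$. Its length is $\ell(\mathcal{T})=\max_{P\in\mathcal{P}}\max_{u,v\in P} d_G(u,v)$ (distances measured in $G$). $G_i=G[L_{\le i-1}]$ is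 the subgraph induced by the first $i$ layers, and $\mathcal{T}_k$ is the subtree of $\mathcal{T}$ induced by the parts at layers $0,1,\dots,k-1$. *)

theory Defs
  imports Main
begin

text \<open>A simple graph is given by a vertex set V and a symmetric irreflexive
  adjacency predicate E (only edges between vertices of V are relevant).\<close>

definition simple_graph :: "'a set \<Rightarrow> ('a \<Rightarrow> 'a \<Rightarrow> bool) \<Rightarrow> bool" where
  "simple_graph V E \<longleftrightarrow> finite V \<and> (\<forall>x y. E x y \<longrightarrow> E y x) \<and> (\<forall>x. \<not> E x x)"

definition edge_rel :: "'a set \<Rightarrow> ('a \<Rightarrow> 'a \<Rightarrow> bool) \<Rightarrow> ('a \<times> 'a) set" where
  "edge_rel V E = {(x, y). x \<in> V \<and> y \<in> V \<and> E x y}"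

definition connected_graph :: "'a set \<Rightarrow> ('a \<Rightarrow> 'a \<Rightarrow> bool) \<Rightarrow> bool" where
  "connected_graph V E \<longleftrightarrow> V \<noteq> {} \<and> (\<forall>u\<in>V. \<forall>v\<in>V. (u, v) \<in> (edge_rel V E)\<^sup>*)"

definition gdist :: "'a set \<Rightarrow> ('a \<Rightarrow> 'a \<Rightarrow> bool) \<Rightarrow> 'a \<Rightarrow> 'a \<Rightarrow> nat" where
  "gdist V E u v = (LEAST n. (u, v) \<in> (edge_rel V E) ^^ n)"

definition conn_in :: "'a set \<Rightarrow> ('a \<Rightarrow> 'a \<Rightarrow> bool) \<Rightarrow> 'a set \<Rightarrow> 'a \<Rightarrow> 'a \<Rightarrow> bool" where
  "conn_in V E W u v \<longleftrightarrow> u \<in> W \<and> v \<in> W \<and> (u, v) \<in> (Restr (edge_rel V E) W)\<^sup>*"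

definition layer :: "'a set \<Rightarrow> ('a \<Rightarrow> 'a \<Rightarrow> bool) \<Rightarrow> 'a \<Rightarrow> nat \<Rightarrow> 'a set" where
  "layer V E s i = {v \<in> V. gdist V E s v = i}"

definition layers_ge :: "'a set \<Rightarrow> ('a \<Rightarrow> 'a \<Rightarrow> bool) \<Rightarrow> 'a \<Rightarrow> nat \<Rightarrow> 'a set" where
  "layers_ge V E s i = {v \<in> V. gdist V E s v \<ge> i}"

text \<open>L_0 \<union> ... \<union> L_{i-1}, the vertex set of G_i (empty for i = 0).\<close>
definition layers_below :: "'a set \<Rightarrow> ('a \<Rightarrow> 'a \<Rightarrow> bool) \<Rightarrow> 'a \<Rightarrow> nat \<Rightarrow> 'a set" where
  "layers_below V E s i = {v \<in> V. gdist V E s v < i}"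

definition part_at :: "'a set \<Rightarrow> ('a \<Rightarrow> 'a \<Rightarrow> bool) \<Rightarrow> 'a \<Rightarrow> nat \<Rightarrow> 'a set \<Rightarrow> bool" where
  "part_at V E s i P \<longleftrightarrow>
     (\<exists>S. S \<noteq> {} \<and> S \<subseteq> layers_ge V E s i
          \<and> (\<forall>u\<in>S. \<forall>v\<in>S. conn_in V E (layers_ge V E s i) u v)
          \<and> (\<forall>u\<in>S. \<forall>v. conn_in V E (layers_ge V E s i) u v \<longrightarrow> v \<in> S)
          \<and> P = S \<inter> layer V E s i \<and> P \<noteq> {})"

definition parts :: "'a set \<Rightarrow> ('a \<Rightarrow> 'a \<Rightarrow> bool) \<Rightarrow> 'a \<Rightarrow> 'a set set" where
  "parts V E s = {P. \<exists>i. part_at V E s i P}"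

definition tree_adj :: "'a set \<Rightarrow> ('a \<Rightarrow> 'a \<Rightarrow> bool) \<Rightarrow> 'a set \<Rightarrow> 'a set \<Rightarrow> bool" where
  "tree_adj V E P P' \<longleftrightarrow> (\<exists>u\<in>P. \<exists>u'\<in>P'. (u, u') \<in> edge_rel V E)"

definition tree_length :: "'a set \<Rightarrow> ('a \<Rightarrow> 'a \<Rightarrow> bool) \<Rightarrow> 'a \<Rightarrow> nat" where
  "tree_length V E s = Max {gdist V E u v | P u v. P \<in> parts V E s \<and> u \<in> P \<and> v \<in> P}"

end

theory Submission
  imports Defs
begin

lemma R_sym: "simple_graph V E \<Longrightarrow> sym (edge_rel V E)"
  unfolding simple_graph_def edge_rel_def sym_def by auto

lemma R_V: "(a, b) \<in> edge_rel V E \<Longrightarrow> a \<in> V \<and> b \<in> V"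
  unfolding edge_rel_def by auto

lemma relpow_sym: "sym R \<Longrightarrow> (a, b) \<in> R ^^ n \<Longrightarrow> (b, a) \<in> R ^^ n"
proof (induction n arbitrary: a b)
  case 0
  then show ?case by simp
next
  case (Suc n)
  then obtain c where c: "(a, c) \<in> R" "(c, b) \<in> R ^^ n" using relpow_Suc_D2 by metis
  have "(b, c) \<in> R ^^ n" using Suc c by blast
  moreover have "(c, a) \<in> R" using c Suc.prems(1) by (meson symD)
  ultimately show ?case by (rule relpow_Suc_I)
qed

lemma rtrancl_V: "(a, w) \<in> (edge_rel V E)\<^sup>* \<Longrightarrow> a \<in> V \<Longrightarrow> w \<in> V"
  by (induction rule: rtrancl_induct) (auto dest: R_V)

lemma gdist_path:
  assumes "connected_graph V E" "u \<in> V" "v \<in> V"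
  shows "(u, v) \<in> edge_rel V E ^^ gdist V E u v"
proof -
  have "\<exists>n. (u, v) \<in> edge_rel V E ^^ n"
    using assms unfolding connected_graph_def by (simp add: rtrancl_power)
  then show ?thesis unfolding gdist_def by (rule LeastI_ex)
qed

lemma gdist_le: "(u, v) \<in> edge_rel V E ^^ n \<Longrightarrow> gdist V E u v \<le> n"
  unfolding gdist_def by (rule Least_le)

lemma mid_path:
  "(a, b) \<in> R ^^ n \<Longrightarrow>
   (a, b) \<in> (Restr R {w. \<exists>p q. p + q = n \<and> (a, w) \<in> R ^^ p \<and> (w, b) \<in> R ^^ q})\<^sup>*"
proof (induction n arbitrary: a)
  case 0
  then show ?case by simp
next
  case (Suc n)
  then obtain c where c: "(a, c) \<in> R" "(c, b) \<in> R ^^ n" using relpow_Suc_D2 by metis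
  let ?M = "{w. \<exists>p q. p + q = Suc n \<and> (a, w) \<in> R ^^ p \<and> (w, b) \<in> R ^^ q}"
  let ?Mc = "{w. \<exists>p q. p + q = n \<and> (c, w) \<in> R ^^ p \<and> (w, b) \<in> R ^^ q}"
  have sub: "?Mc \<subseteq> ?M"
  proof
    fix w assume "w \<in> ?Mc"
    then obtain p q where pq: "p + q = n" "(c, w) \<in> R ^^ p" "(w, b) \<in> R ^^ q" by blast
    have "(a, w) \<in> R ^^ Suc p" using c(1) pq(2) by (rule relpow_Suc_I2)
    then show "w \<in> ?M" using pq by (intro CollectI exI[of _ "Suc p"] exI[of _ q]) auto
  qed
  have aM: "a \<in> ?M" using Suc.prems by (intro CollectI exI[of _ 0] exI[of _ "Suc n"]) auto
  have cM: "c \<in> ?M" using c by (intro CollectI exI[of _ 1] exI[of _ n]) auto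
  have "(c, b) \<in> (Restr R ?Mc)\<^sup>*" using Suc.IH c(2) by blast
  then have "(c, b) \<in> (Restr R ?M)\<^sup>*"
    by (rule rtrancl_mono[THEN subsetD, rotated]) (use sub in blast)
  moreover have "(a, c) \<in> Restr R ?M" using aM cM c(1) by blast
  ultimately show ?case by (meson converse_rtrancl_into_rtrancl)
qed

lemma conn_sym: "simple_graph V E \<Longrightarrow> conn_in V E W a b \<Longrightarrow> conn_in V E W b a"
proof -
  assume sg: "simple_graph V E" and c: "conn_in V E W a b"
  have "sym (Restr (edge_rel V E) W)"
    using R_sym[OF sg] unfolding sym_def by blast
  then have "sym ((Restr (edge_rel V E) W)\<^sup>*)" by (rule sym_rtrancl)
  then show ?thesis using c unfolding conn_in_def by (meson symD)
qed

lemma conn_trans: "conn_in V E W a b \<Longrightarrow> conn_in V E W b c \<Longrightarrow> conn_in V E W a c"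
  unfolding conn_in_def by auto

lemma conn_mono: "W \<subseteq> W' \<Longrightarrow> conn_in V E W a b \<Longrightarrow> conn_in V E W' a b"
proof -
  assume W: "W \<subseteq> W'" and c: "conn_in V E W a b"
  have "Restr (edge_rel V E) W \<subseteq> Restr (edge_rel V E) W'" using W by blast
  then have "(Restr (edge_rel V E) W)\<^sup>* \<subseteq> (Restr (edge_rel V E) W')\<^sup>*" by (rule rtrancl_mono)
  then show ?thesis using c W unfolding conn_in_def by blast
qed

lemma conn_edge: "conn_in V E W a b \<Longrightarrow> (b, c) \<in> edge_rel V E \<Longrightarrow> c \<in> W \<Longrightarrow> conn_in V E W a c"
proof -
  assume c: "conn_in V E W a b" and e: "(b, c) \<in> edge_rel V E" and cW: "c \<in> W"
  have "(b, c) \<in> Restr (edge_rel V E) W" using c e cW unfolding conn_in_def by blast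
  then show ?thesis using c cW unfolding conn_in_def by (meson rtrancl.rtrancl_into_rtrancl)
qed

lemma part_exists:
  assumes sg: "simple_graph V E" and u: "u \<in> layer V E s j"
    and c: "conn_in V E (layers_ge V E s j) u v"
  shows "\<exists>P. part_at V E s j P \<and> u \<in> P \<and> (v \<in> layer V E s j \<longrightarrow> v \<in> P)"
proof -
  let ?W = "layers_ge V E s j"
  define S where "S = {w. conn_in V E ?W u w}"
  have uW: "u \<in> ?W" using u unfolding layer_def layers_ge_def by auto
  have uS: "u \<in> S" unfolding S_def conn_in_def using uW by auto
  have "part_at V E s j (S \<inter> layer V E s j)"
    unfolding part_at_def
  proof (intro exI[of _ S] conjI)
    show "S \<noteq> {}" using uS by blast
    show "S \<subseteq> ?W" unfolding S_def conn_in_def by blast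
    show "\<forall>a\<in>S. \<forall>b\<in>S. conn_in V E ?W a b"
    proof (intro ballI)
      fix a b assume "a \<in> S" "b \<in> S"
      then have "conn_in V E ?W u a" "conn_in V E ?W u b" unfolding S_def by auto
      then show "conn_in V E ?W a b" using conn_sym[OF sg] conn_trans by metis
    qed
    show "\<forall>a\<in>S. \<forall>b. conn_in V E ?W a b \<longrightarrow> b \<in> S"
    proof (intro ballI allI impI)
      fix a b assume "a \<in> S" "conn_in V E ?W a b"
      then show "b \<in> S" unfolding S_def using conn_trans by (metis mem_Collect_eq)
    qed
    show "S \<inter> layer V E s j \<noteq> {}" using uS u by blast
  qed simp
  moreover have "v \<in> S" unfolding S_def using c by simp
  ultimately show ?thesis using uS u by blast
qed

lemma part_sub_layer: "part_at V E s j P \<Longrightarrow> P \<subseteq> layer V E s j"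
  unfolding part_at_def by auto

lemma tree_length_bound:
  assumes sg: "simple_graph V E" and P: "P \<in> parts V E s" and "u \<in> P" "v \<in> P"
  shows "gdist V E u v \<le> tree_length V E s"
proof -
  let ?X = "{gdist V E u v | P u v. P \<in> parts V E s \<and> u \<in> P \<and> v \<in> P}"
  let ?f = "\<lambda>(u, v). gdist V E u v"
  have "?X \<subseteq> ?f ` (V \<times> V)"
  proof
    fix x assume "x \<in> ?X"
    then obtain P a b where x: "x = gdist V E a b" "P \<in> parts V E s" "a \<in> P" "b \<in> P" by blast
    then obtain j where "part_at V E s j P" unfolding parts_def by blast
    then have "P \<subseteq> layer V E s j" by (rule part_sub_layer)
    then have "a \<in> V" "b \<in> V" using x unfolding layer_def by auto
    then show "x \<in> ?f ` (V \<times> V)" using x(1) by (intro image_eqI[of _ _ "(a, b)"]) auto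
  qed
  moreover have "finite V" using sg unfolding simple_graph_def by simp
  then have "finite (?f ` (V \<times> V))" by (intro finite_imageI finite_cartesian_product)
  ultimately have fin: "finite ?X" by (rule finite_subset)
  have mem: "gdist V E u v \<in> ?X" using assms by blast
  show ?thesis unfolding tree_length_def using Max_ge[OF fin mem] .
qed

lemma level_conn:
  assumes sg: "simple_graph V E" and cg: "connected_graph V E" and sV: "s \<in> V"
    and y: "y \<in> layer V E s D" and y': "y' \<in> layer V E s D"
    and c: "conn_in V E (layers_ge V E s D) y y'"
    and b1: "2 * j + tree_length V E s \<le> 2 * D"
    and b2: "2 * D + tree_length V E s < 2 * i"
  shows "conn_in V E (layers_ge V E s j \<inter> layers_below V E s i) y y'"
proof -
  let ?R = "edge_rel V E"
  let ?l = "tree_length V E s"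
  let ?W = "layers_ge V E s j \<inter> layers_below V E s i"
  obtain P where P: "part_at V E s D P" "y \<in> P" "y' \<in> P"
    using part_exists[OF sg y c] y' by blast
  have "P \<in> parts V E s" using P unfolding parts_def by blast
  then have n: "gdist V E y y' \<le> ?l" using tree_length_bound[OF sg] P by blast
  have yV: "y \<in> V" and y'V: "y' \<in> V" and dy: "gdist V E s y = D" and dy': "gdist V E s y' = D"
    using y y' unfolding layer_def by auto
  define n where "n = gdist V E y y'"
  have pth: "(y, y') \<in> ?R ^^ n" unfolding n_def using gdist_path[OF cg yV y'V] .
  let ?M = "{w. \<exists>p q. p + q = n \<and> (y, w) \<in> ?R ^^ p \<and> (w, y') \<in> ?R ^^ q}"
  have sy: "(s, y) \<in> ?R ^^ D" using gdist_path[OF cg sV yV] dy by simp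
  have sy': "(s, y') \<in> ?R ^^ D" using gdist_path[OF cg sV y'V] dy' by simp
  have MW: "?M \<subseteq> ?W"
  proof
    fix w assume "w \<in> ?M"
    then obtain p q where pq: "p + q = n" "(y, w) \<in> ?R ^^ p" "(w, y') \<in> ?R ^^ q" by blast
    have wV: "w \<in> V" using rtrancl_V[OF relpow_imp_rtrancl[OF pq(2)] yV] .
    have sw: "(s, w) \<in> ?R ^^ gdist V E s w" using gdist_path[OF cg sV wV] .
    have "(s, w) \<in> ?R ^^ (D + p)" using sy pq(2) by (simp add: relpow_add relcomp.intros)
    then have a1: "gdist V E s w \<le> D + p" by (rule gdist_le)
    have wy': "(y', w) \<in> ?R ^^ q" using relpow_sym[OF R_sym[OF sg] pq(3)] .
    have "(s, w) \<in> ?R ^^ (D + q)" using sy' wy' by (simp add: relpow_add relcomp.intros)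
    then have a2: "gdist V E s w \<le> D + q" by (rule gdist_le)
    have wy: "(w, y) \<in> ?R ^^ p" using relpow_sym[OF R_sym[OF sg] pq(2)] .
    have "(s, y) \<in> ?R ^^ (gdist V E s w + p)" using sw wy by (simp add: relpow_add relcomp.intros)
    then have a3: "D \<le> gdist V E s w + p" using gdist_le dy by metis
    have "(s, y') \<in> ?R ^^ (gdist V E s w + q)" using sw pq(3) by (simp add: relpow_add relcomp.intros)
    then have a4: "D \<le> gdist V E s w + q" using gdist_le dy' by metis
    have "p + q \<le> ?l" using pq(1) n n_def by simp
    then have "j \<le> gdist V E s w \<and> gdist V E s w < i" using a1 a2 a3 a4 b1 b2 by linarith
    then show "w \<in> ?W" using wV unfolding layers_ge_def layers_below_def by auto
  qed
  have "(y, y') \<in> (Restr ?R ?M)\<^sup>*" using mid_path[OF pth] .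
  then have "(y, y') \<in> (Restr ?R ?W)\<^sup>*"
    by (rule rtrancl_mono[THEN subsetD, rotated]) (use MW in blast)
  moreover have "y \<in> ?W" "y' \<in> ?W" using yV y'V dy dy' b1 b2
    unfolding layers_ge_def layers_below_def by auto
  ultimately show ?thesis unfolding conn_in_def by blast
qed


lemma edge_dist:
  assumes cg: "connected_graph V E" and sV: "s \<in> V" and e: "(x, x') \<in> edge_rel V E"
  shows "gdist V E s x' \<le> gdist V E s x + 1"
proof -
  have "x \<in> V" using R_V[OF e] by simp
  then have "(s, x) \<in> edge_rel V E ^^ gdist V E s x" using gdist_path[OF cg sV] by blast
  then have "(s, x') \<in> edge_rel V E ^^ Suc (gdist V E s x)" using e by (rule relpow_Suc_I)
  then show ?thesis using gdist_le by fastforce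
qed

lemma reroute:
  assumes sg: "simple_graph V E" and cg: "connected_graph V E" and sV: "s \<in> V"
    and u: "u \<in> layer V E s j" and v: "v \<in> layer V E s j"
    and c: "conn_in V E (layers_ge V E s j) u v"
    and bi: "j + tree_length V E s + 1 \<le> i"
  shows "conn_in V E (layers_ge V E s j \<inter> layers_below V E s i) u v"
proof -
  let ?R = "edge_rel V E"
  let ?l = "tree_length V E s"
  let ?W = "layers_ge V E s j \<inter> layers_below V E s i"
  let ?d = "gdist V E s"
  define D where "D = j + (?l + 1) div 2"
  have b1: "2 * j + ?l \<le> 2 * D" and b2: "2 * D + ?l < 2 * i" using bi unfolding D_def by auto
  have du: "?d u = j" and uV: "u \<in> V" using u unfolding layer_def by auto
  have dv: "?d v = j" using v unfolding layer_def by auto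
  define Good where "Good x \<longleftrightarrow> (?d x \<le> D \<longrightarrow> conn_in V E ?W u x) \<and>
     (D \<le> ?d x \<longrightarrow> (\<exists>y. y \<in> layer V E s D \<and> conn_in V E ?W u y \<and> conn_in V E (layers_ge V E s D) y x))" for x
  have uW: "u \<in> ?W" using uV du b1 b2 unfolding layers_ge_def layers_below_def by auto
  have cuu: "conn_in V E ?W u u" using uW unfolding conn_in_def by auto
  have "(u, v) \<in> (Restr ?R (layers_ge V E s j))\<^sup>*" using c unfolding conn_in_def by blast
  then have "Good v"
  proof (induction rule: rtrancl_induct)
    case base
    show ?case unfolding Good_def
    proof (intro conjI impI)
      show "conn_in V E ?W u u" by (rule cuu)
      assume "D \<le> ?d u"
      then have "D = j" using du b1 unfolding D_def by simp
      then have "u \<in> layer V E s D" "conn_in V E (layers_ge V E s D) u u"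
        using u du uV unfolding conn_in_def layers_ge_def by auto
      then show "\<exists>y. y \<in> layer V E s D \<and> conn_in V E ?W u y \<and> conn_in V E (layers_ge V E s D) y u"
        using cuu by blast
    qed
  next
    case (step x x')
    have e: "(x, x') \<in> ?R" and xj: "x \<in> layers_ge V E s j" and x'j: "x' \<in> layers_ge V E s j"
      using step(2) by auto
    have e': "(x', x) \<in> ?R" using e R_sym[OF sg] by (meson symD)
    have d1: "?d x' \<le> ?d x + 1" using edge_dist[OF cg sV e] .
    have d2: "?d x \<le> ?d x' + 1" using edge_dist[OF cg sV e'] .
    have x'V: "x' \<in> V" using R_V[OF e] by simp
    have jx': "j \<le> ?d x'" using x'j unfolding layers_ge_def by simp
    have first: "conn_in V E ?W u x'" if le: "?d x' \<le> D"
    proof (cases "?d x \<le> D")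
      case True
      then have "conn_in V E ?W u x" using step(3) unfolding Good_def by blast
      moreover have "x' \<in> ?W" using x'V jx' le b2 unfolding layers_ge_def layers_below_def by auto
      ultimately show ?thesis using e conn_edge by metis
    next
      case False
      then obtain y where y: "y \<in> layer V E s D" "conn_in V E ?W u y"
        "conn_in V E (layers_ge V E s D) y x" using step(3) unfolding Good_def by auto
      have dx': "?d x' = D" using False le d2 by simp
      then have "x' \<in> layers_ge V E s D" "x' \<in> layer V E s D"
        using x'V unfolding layers_ge_def layer_def by auto
      then have "conn_in V E (layers_ge V E s D) y x'" "x' \<in> layer V E s D"
        using y(3) e conn_edge by metis+
      then have "conn_in V E ?W y x'"
        using level_conn[OF sg cg sV y(1) _ _ b1 b2] by blast
      then show ?thesis using y(2) conn_trans by metis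
    qed
    show ?case unfolding Good_def
    proof (intro conjI impI)
      assume "?d x' \<le> D" then show "conn_in V E ?W u x'" by (rule first)
    next
      assume Dx': "D \<le> ?d x'"
      show "\<exists>y. y \<in> layer V E s D \<and> conn_in V E ?W u y \<and> conn_in V E (layers_ge V E s D) y x'"
      proof (cases "D \<le> ?d x")
        case True
        then obtain y where y: "y \<in> layer V E s D" "conn_in V E ?W u y"
          "conn_in V E (layers_ge V E s D) y x" using step(3) unfolding Good_def by auto
        have "x' \<in> layers_ge V E s D" using x'V Dx' unfolding layers_ge_def by auto
        then have "conn_in V E (layers_ge V E s D) y x'" using y(3) e conn_edge by metis
        then show ?thesis using y by blast
      next
        case False
        then have dx': "?d x' = D" using d1 Dx' by simp
        then have "conn_in V E ?W u x'" using first by simp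
        moreover have "x' \<in> layer V E s D" "conn_in V E (layers_ge V E s D) x' x'"
          using x'V dx' unfolding layer_def conn_in_def layers_ge_def by auto
        ultimately show ?thesis by blast
      qed
    qed
  qed
  then show ?thesis using dv b1 unfolding Good_def D_def by auto
qed

theorem mainTheorem4:
  fixes V :: "'a set" and E :: "'a \<Rightarrow> 'a \<Rightarrow> bool" and s :: 'a and i k :: nat
  assumes "simple_graph V E" and "connected_graph V E" and "s \<in> V"
    and "i \<ge> tree_length V E s + 2"
    and "k \<le> i - tree_length V E s - 2"
  shows "(\<forall>j<k. \<forall>u\<in>layer V E s j. \<forall>v\<in>layer V E s j.
            (\<exists>P\<in>parts V E s. u \<in> P \<and> v \<in> P)
              \<longleftrightarrow> conn_in V E (layers_ge V E s j \<inter> layers_below V E s i) u v)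
       \<and> (\<forall>p<k. \<forall>q<k. \<forall>P P'. part_at V E s p P \<and> part_at V E s q P' \<longrightarrow>
            (tree_adj V E P P'
              \<longleftrightarrow> (\<exists>u\<in>P. \<exists>u'\<in>P'. (u, u') \<in> Restr (edge_rel V E) (layers_below V E s i))))"
proof (intro conjI allI impI ballI)
  fix j u v assume jk: "j < k" and u: "u \<in> layer V E s j" and v: "v \<in> layer V E s j"
  have bi: "j + tree_length V E s + 1 \<le> i" using jk assms(4,5) by linarith
  show "(\<exists>P\<in>parts V E s. u \<in> P \<and> v \<in> P)
              \<longleftrightarrow> conn_in V E (layers_ge V E s j \<inter> layers_below V E s i) u v"
  proof
    assume "\<exists>P\<in>parts V E s. u \<in> P \<and> v \<in> P"
    then obtain P j' where P: "part_at V E s j' P" "u \<in> P" "v \<in> P" unfolding parts_def by blast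
    have "j' = j" using part_sub_layer[OF P(1)] P(2) u unfolding layer_def by auto
    then obtain S where S: "\<forall>a\<in>S. \<forall>b\<in>S. conn_in V E (layers_ge V E s j) a b" "P = S \<inter> layer V E s j"
      using P(1) unfolding part_at_def by blast
    then have "conn_in V E (layers_ge V E s j) u v" using P by blast
    then show "conn_in V E (layers_ge V E s j \<inter> layers_below V E s i) u v"
      using reroute[OF assms(1,2,3) u v _ bi] by blast
  next
    assume "conn_in V E (layers_ge V E s j \<inter> layers_below V E s i) u v"
    then have "conn_in V E (layers_ge V E s j) u v" using conn_mono[of _ "layers_ge V E s j"] by blast
    then obtain P where "part_at V E s j P" "u \<in> P" "v \<in> P" using part_exists[OF assms(1) u] v by blast
    then show "\<exists>P\<in>parts V E s. u \<in> P \<and> v \<in> P" unfolding parts_def by blast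
  qed
next
  fix p q P P' assume pk: "p < k" and qk: "q < k" and PP: "part_at V E s p P \<and> part_at V E s q P'"
  have "P \<subseteq> layers_below V E s i" "P' \<subseteq> layers_below V E s i"
    using part_sub_layer PP pk qk assms(4,5) unfolding layer_def layers_below_def by fastforce+
  then show "tree_adj V E P P'
              \<longleftrightarrow> (\<exists>u\<in>P. \<exists>u'\<in>P'. (u, u') \<in> Restr (edge_rel V E) (layers_below V E s i))"
    unfolding tree_adj_def by blast
qed

end
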